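(* Let $c>0$, $q>0$, let $f,g:\mathbb{R}\to\mathbb{R}$ be continuous, $a\in\mathbb{R}$, and let $\varphi$ be a solution on $[0,R)$ of $$\varphi''+\frac{c-1}{r}\varphi'=f(\varphi)+g(\varphi)|\varphi'|^q,\qquad\varphi(0)=a,\qquad\varphi'(0)=0 .$$ Then: \begin{itemize} \item[(i)] if $f$ is positive, then $\varphi$ is strictly increasing; \item[(ii)] if $f$ is positive, $f,g$ are nondecreasing, and $c\ge1$, then $\varphi$ is convex and $\varphi'(r)\le\left(\frac{f(\varphi(r))}{g^-(\varphi(r))}\right)^{1/q}$ for all $r\in[0,R)$ (the right-hand side being $+\infty$ where $g^-(\varphi(r))=0$); \item[(iii)] if $f$ is positive, $f,g$ are nondecreasing, $g$ is nonnegative and $c\ge1$, then $\varphi''(r)\ge\frac{\varphi'(r)}{r}$ for all $r\in(0,R)$. \end{itemize}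
   Context: A solution on $[0,R)$, $0<R\le+\infty$, is a function $\varphi\in C^2((0,R))\cap C([0,R))$ satisfying the ODE on $(0,R)$, $\varphi(0)=a$, $\lim_{r\to0^+}\varphi'(r)=0=\varphi'(0)$, and such that $\lim_{r\to0^+}\varphi''(r)$ exists in $\mathbb{R}$. $g^-=\max(-g,0)$. *)

theory Defs
  imports "HOL-Analysis.Analysis"
begin

definition cl_int :: "ereal \<Rightarrow> real set" where
  "cl_int R = {r. 0 \<le> r \<and> ereal r < R}"

definition op_int :: "ereal \<Rightarrow> real set" where
  "op_int R = {r. 0 < r \<and> ereal r < R}"

definition gminus :: "(real \<Rightarrow> real) \<Rightarrow> real \<Rightarrow> real" where
  "gminus g x = max (- g x) 0"

definition is_solution ::
  "real \<Rightarrow> real \<Rightarrow> (real \<Rightarrow> real) \<Rightarrow> (real \<Rightarrow> real) \<Rightarrow> real \<Rightarrow> ereal \<Rightarrow> (real \<Rightarrow> real) \<Rightarrow> bool" where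
  "is_solution c q f g a R \<phi> \<longleftrightarrow>
     continuous_on (cl_int R) \<phi> \<and>
     (\<forall>r\<in>op_int R. \<phi> differentiable (at r)) \<and>
     (\<forall>r\<in>op_int R. deriv \<phi> differentiable (at r)) \<and>
     continuous_on (op_int R) (deriv (deriv \<phi>)) \<and>
     (\<forall>r\<in>op_int R. deriv (deriv \<phi>) r + (c - 1) / r * deriv \<phi> r
                    = f (\<phi> r) + g (\<phi> r) * \<bar>deriv \<phi> r\<bar> powr q) \<and>
     \<phi> 0 = a \<and>
     (\<phi> has_real_derivative 0) (at 0 within cl_int R) \<and>
     (deriv \<phi> \<longlongrightarrow> 0) (at_right 0) \<and>
     (\<exists>L. (deriv (deriv \<phi>) \<longlongrightarrow> L) (at_right 0))"

end

theory Submission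
  imports Defs
begin

locale sol =
  fixes c q a :: real and f g \<phi> :: "real \<Rightarrow> real" and R :: ereal
  assumes c: "c > 0" and q: "q > 0"
    and contf: "continuous_on UNIV f" and contg: "continuous_on UNIV g"
    and R: "0 < R"
    and S: "is_solution c q f g a R \<phi>"
begin

abbreviation "\<psi> \<equiv> deriv \<phi>"
abbreviation "\<psi>2 \<equiv> deriv (deriv \<phi>)"

lemma op_open: "open (op_int R)"
proof (cases R)
  case (real b) then have "op_int R = {0<..<b}" by (auto simp: op_int_def)
  then show ?thesis by simp
next
  case PInf then have "op_int R = {0<..}" by (auto simp: op_int_def)
  then show ?thesis by simp
next
  case MInf then show ?thesis using R by simp
qed

lemma op_down: "r \<in> op_int R \<Longrightarrow> 0 < s \<Longrightarrow> s \<le> r \<Longrightarrow> s \<in> op_int R"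
  by (auto simp: op_int_def) (meson ereal_less_eq(3) order.strict_trans1)

lemma cl_down: "r \<in> cl_int R \<Longrightarrow> 0 \<le> s \<Longrightarrow> s \<le> r \<Longrightarrow> s \<in> cl_int R"
  by (auto simp: cl_int_def) (meson ereal_less_eq(3) order.strict_trans1)

lemma op_sub: "op_int R \<subseteq> cl_int R"
  by (auto simp: op_int_def cl_int_def)

lemma cl_op: "r \<in> cl_int R \<Longrightarrow> r \<noteq> 0 \<Longrightarrow> r \<in> op_int R"
  by (auto simp: op_int_def cl_int_def)

lemma zero_cl: "0 \<in> cl_int R"
  using R by (auto simp: cl_int_def zero_ereal_def)

lemma delta0: obtains d where "d > 0" "\<And>s. 0 < s \<Longrightarrow> s < d \<Longrightarrow> s \<in> op_int R"
proof (cases R)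
  case (real b) then show ?thesis using R that[of b] by (auto simp: op_int_def)
next
  case PInf then show ?thesis using that[of 1] by (auto simp: op_int_def)
next
  case MInf then show ?thesis using R by simp
qed

lemma AR: "at_right 0 = at (0::real) within op_int R"
proof -
  obtain d where d: "d > 0" "\<And>s. 0 < s \<Longrightarrow> s < d \<Longrightarrow> s \<in> op_int R" using delta0 by blast
  show ?thesis
    apply (rule at_within_nhd[of _ "{-d<..<d}"])
    using d by (auto simp: op_int_def)
qed

lemma ev_op: "eventually (\<lambda>r. r \<in> op_int R) (at_right 0)"
  unfolding AR by (simp add: eventually_at_topological) (metis UNIV_I open_UNIV)

lemma dphi: "r \<in> op_int R \<Longrightarrow> (\<phi> has_real_derivative \<psi> r) (at r)"
  using S unfolding is_solution_def by (simp add: DERIV_deriv_iff_real_differentiable)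

lemma dpsi: "r \<in> op_int R \<Longrightarrow> (\<psi> has_real_derivative \<psi>2 r) (at r)"
  using S unfolding is_solution_def by (simp add: DERIV_deriv_iff_real_differentiable)

lemma ode: "r \<in> op_int R \<Longrightarrow> \<psi>2 r + (c - 1) / r * \<psi> r = f (\<phi> r) + g (\<phi> r) * \<bar>\<psi> r\<bar> powr q"
  using S unfolding is_solution_def by blast

lemma cont_psi2: "r \<in> op_int R \<Longrightarrow> isCont \<psi>2 r"
  using S op_open unfolding is_solution_def by (simp add: continuous_on_eq_continuous_at)

lemma cont_psi: "r \<in> op_int R \<Longrightarrow> isCont \<psi> r"
  using dpsi DERIV_isCont by blast

lemma cont_phi: "r \<in> op_int R \<Longrightarrow> isCont \<phi> r"
  using dphi DERIV_isCont by blast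

lemma psi0: "(\<psi> \<longlongrightarrow> 0) (at_right 0)"
  using S unfolding is_solution_def by blast

lemma phi00: "\<phi> 0 = a"
  using S unfolding is_solution_def by blast

lemma phi0: "(\<phi> \<longlongrightarrow> a) (at_right 0)"
proof -
  have "continuous (at 0 within cl_int R) \<phi>"
    using S zero_cl unfolding is_solution_def by (simp add: continuous_on_eq_continuous_within)
  then have "(\<phi> \<longlongrightarrow> a) (at 0 within cl_int R)" using phi00 by (simp add: continuous_within)
  then have "(\<phi> \<longlongrightarrow> a) (at 0 within op_int R)" using op_sub tendsto_within_subset by blast
  then show ?thesis using AR by simp
qed

lemma Lval: obtains L where "(\<psi>2 \<longlongrightarrow> L) (at_right 0)" "c * L = f a"
proof -
  obtain L where L: "(\<psi>2 \<longlongrightarrow> L) (at_right 0)" using S unfolding is_solution_def by blast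
  have rat: "((\<lambda>r. \<psi> r / r) \<longlongrightarrow> L) (at_right 0)"
  proof (rule lhopital_right_0[where g'="\<lambda>_. 1" and f'="\<psi>2"])
    show "(\<psi> \<longlongrightarrow> 0) (at_right 0)" by (rule psi0)
    show "((\<lambda>x. x) \<longlongrightarrow> 0) (at_right (0::real))" by (simp add: tendsto_ident_at)
    show "\<forall>\<^sub>F x in at_right 0. (x::real) \<noteq> 0" by (simp add: eventually_at_right_less eventually_mono[OF eventually_at_right_less] )
    show "\<forall>\<^sub>F x in at_right 0. (1::real) \<noteq> 0" by simp
    show "\<forall>\<^sub>F x in at_right 0. (\<psi> has_real_derivative \<psi>2 x) (at x)"
      using ev_op by eventually_elim (rule dpsi)
    show "\<forall>\<^sub>F x in at_right 0. ((\<lambda>x. x) has_real_derivative 1) (at x)"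
      by (simp add: DERIV_ident)
    show "((\<lambda>x. \<psi>2 x / 1) \<longlongrightarrow> L) (at_right 0)" using L by simp
  qed
  have l1: "((\<lambda>r. \<psi>2 r + (c - 1) / r * \<psi> r) \<longlongrightarrow> L + (c - 1) * L) (at_right 0)"
  proof -
    have "((\<lambda>r. \<psi>2 r + (c - 1) * (\<psi> r / r)) \<longlongrightarrow> L + (c - 1) * L) (at_right 0)"
      by (intro tendsto_intros L rat)
    then show ?thesis by simp
  qed
  have l2: "((\<lambda>r. f (\<phi> r) + g (\<phi> r) * \<bar>\<psi> r\<bar> powr q) \<longlongrightarrow> f a + g a * 0) (at_right 0)"
  proof (intro tendsto_intros)
    show "((\<lambda>r. f (\<phi> r)) \<longlongrightarrow> f a) (at_right 0)"
      using contf phi0 by (intro isCont_tendsto_compose[of a f]) (auto simp: continuous_on_eq_continuous_at)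
    show "((\<lambda>r. g (\<phi> r)) \<longlongrightarrow> g a) (at_right 0)"
      using contg phi0 by (intro isCont_tendsto_compose[of a g]) (auto simp: continuous_on_eq_continuous_at)
    show "((\<lambda>r. \<bar>\<psi> r\<bar> powr q) \<longlongrightarrow> 0) (at_right 0)"
      by (rule tendsto_zero_powrI[where b=q]) (use psi0 q in \<open>auto intro: tendsto_rabs_zero\<close>)
  qed
  have l3: "((\<lambda>r. f (\<phi> r) + g (\<phi> r) * \<bar>\<psi> r\<bar> powr q) \<longlongrightarrow> L + (c - 1) * L) (at_right 0)"
  proof (rule Lim_transform_eventually[OF l1])
    show "\<forall>\<^sub>F x in at_right 0. \<psi>2 x + (c - 1) / x * \<psi> x = f (\<phi> x) + g (\<phi> x) * \<bar>\<psi> x\<bar> powr q"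
      using ev_op by eventually_elim (rule ode)
  qed
  have "L + (c - 1) * L = f a + g a * 0"
    using tendsto_unique[OF _ l3 l2] by simp
  then show ?thesis using that L by (auto simp: algebra_simps)
qed

lemma near0:
  assumes fpos: "\<forall>x. f x > 0"
  obtains d where "d > 0" "\<And>s. 0 < s \<Longrightarrow> s < d \<Longrightarrow> s \<in> op_int R \<and> \<psi>2 s > 0 \<and> \<psi> s > 0"
proof -
  obtain L where L: "(\<psi>2 \<longlongrightarrow> L) (at_right 0)" "c * L = f a" using Lval by blast
  have "L > 0" using L(2) fpos c by (metis mult_pos_pos not_less mult_nonneg_nonpos less_le_not_le)
  then have "eventually (\<lambda>s. \<psi>2 s > 0) (at_right 0)" using L(1) order_tendstoD(1) by blast
  then have "eventually (\<lambda>s. \<psi>2 s > 0 \<and> s \<in> op_int R) (at_right 0)" using ev_op eventually_conj by blast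
  then obtain b where b: "b > 0" "\<And>s. 0 < s \<Longrightarrow> s < b \<Longrightarrow> \<psi>2 s > 0 \<and> s \<in> op_int R"
    unfolding eventually_at_right_field by auto
  have inc: "\<psi> x < \<psi> y" if "0 < x" "x < y" "y < b" for x y
  proof (rule DERIV_pos_imp_increasing[OF \<open>x<y\<close>])
    fix t assume "x \<le> t" "t \<le> y"
    then have "0 < \<psi>2 t \<and> t \<in> op_int R" using that b(2) by auto
    then show "\<exists>z. (\<psi> has_real_derivative z) (at t) \<and> 0 < z" using dpsi by blast
  qed
  have pos: "\<psi> s > 0" if "0 < s" "s < b" for s
  proof -
    have "0 \<le> \<psi> (s/2)"
    proof (rule tendsto_upperbound[OF psi0])
      show "\<forall>\<^sub>F i in at_right 0. \<psi> i \<le> \<psi> (s / 2)"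
        unfolding eventually_at_right_field using that inc
        by (intro exI[of _ "s/2"]) (auto intro: less_imp_le)
    qed simp
    also have "\<dots> < \<psi> s" using inc that by simp
    finally show ?thesis .
  qed
  show ?thesis using that b pos by blast
qed

lemma psipos:
  assumes fpos: "\<forall>x. f x > 0" and r: "r \<in> op_int R"
  shows "\<psi> r > 0"
proof (rule ccontr)
  assume neg: "\<not> \<psi> r > 0"
  obtain d where d: "d > 0" "\<And>s. 0 < s \<Longrightarrow> s < d \<Longrightarrow> s \<in> op_int R \<and> \<psi>2 s > 0 \<and> \<psi> s > 0"
    using near0 fpos by blast
  define e where "e = d / 2"
  have e: "0 < e" "e < d" using d by (auto simp: e_def)
  have "\<psi> e > 0" using d e by blast
  then have er: "e < r" using neg d(2)[of r] r e by (cases "r < d") (auto simp: op_int_def)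
  define Z where "Z = {s. e \<le> s \<and> s \<le> r \<and> \<psi> s \<le> 0}"
  have rZ: "r \<in> Z" using er neg by (auto simp: Z_def)
  have sub: "{e..r} \<subseteq> op_int R" using r e op_down by auto
  have contZ: "continuous_on {e..r} \<psi>"
    using sub cont_psi by (meson continuous_at_imp_continuous_on subsetD)
  have "closed Z"
  proof -
    have "Z = {e..r} \<inter> \<psi> -` {..0}" by (auto simp: Z_def)
    moreover have "closed ({e..r} \<inter> \<psi> -` {..0})"
      using continuous_closed_preimage[OF contZ, of "{..0}"] by (simp add: Int_commute vimage_def)
    ultimately show ?thesis by simp
  qed
  define r0 where "r0 = Inf Z"
  have bdd: "bdd_below Z" by (auto simp: Z_def bdd_below_def)
  have r0Z: "r0 \<in> Z" unfolding r0_def using closed_contains_Inf[OF _ bdd \<open>closed Z\<close>] rZ by blast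
  have r0e: "e < r0" using r0Z \<open>\<psi> e > 0\<close> by (auto simp: Z_def) (metis le_less not_le)
  have r0op: "r0 \<in> op_int R" using r0Z sub r0e e by (auto simp: Z_def)
  have before: "\<psi> s > 0" if "0 < s" "s < r0" for s
  proof (cases "s < d")
    case True then show ?thesis using d that by blast
  next
    case False
    then have "s \<notin> Z" using that cInf_lower[OF _ bdd, of s] unfolding r0_def by force
    then show ?thesis using False e that r0Z by (auto simp: Z_def)
  qed
  have "0 \<le> \<psi> r0"
  proof (rule tendsto_lowerbound)
    show "(\<psi> \<longlongrightarrow> \<psi> r0) (at_left r0)"
      using cont_psi[OF r0op] by (simp add: isCont_def filterlim_at_split)
    show "\<forall>\<^sub>F i in at_left r0. 0 \<le> \<psi> i"
      unfolding eventually_at_left_field using r0e e before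
      by (intro exI[of _ 0]) (auto intro: less_imp_le)
  qed simp
  then have z: "\<psi> r0 = 0" using r0Z by (auto simp: Z_def)
  have "\<psi>2 r0 = f (\<phi> r0)" using ode[OF r0op] z by simp
  then have "\<psi>2 r0 > 0" using fpos by simp
  then obtain h where h: "h > 0" "\<And>t. t > 0 \<Longrightarrow> t < h \<Longrightarrow> \<psi> (r0 - t) < \<psi> r0"
    using DERIV_pos_inc_left[OF dpsi[OF r0op]] by blast
  define t where "t = min (h/2) (r0/2)"
  have "0 < t" "t < h" using h r0e e by (auto simp: t_def)
  then have "\<psi> (r0 - t) < 0" using h z by simp
  moreover have "\<psi> (r0 - t) > 0" using before[of "r0 - t"] h r0e e by (auto simp: t_def)
  ultimately show False by simp
qed

lemma mvt_cl:
  assumes "x \<in> cl_int R" "y \<in> cl_int R" "x < y"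
  shows "\<exists>z. x < z \<and> z < y \<and> z \<in> op_int R \<and> \<phi> y - \<phi> x = (y - x) * \<psi> z"
proof -
  have sub: "{x..y} \<subseteq> cl_int R" using assms cl_down by (auto simp: cl_int_def)
  have "continuous_on {x..y} \<phi>"
    using S sub unfolding is_solution_def by (meson continuous_on_subset)
  moreover have "\<phi> differentiable (at t)" if "x < t" "t < y" for t
    using S that assms cl_op[of t] cl_down[of y t] unfolding is_solution_def by (auto simp: cl_int_def)
  ultimately obtain l z where lz: "x < z" "z < y" "DERIV \<phi> z :> l" "\<phi> y - \<phi> x = (y - x) * l"
    using MVT[OF assms(3)] by blast
  have zop: "z \<in> op_int R" using lz assms cl_op[of z] cl_down[of y z] by (auto simp: cl_int_def)
  have "l = \<psi> z" using DERIV_unique[OF lz(3) dphi[OF zop]] .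
  then show ?thesis using lz zop by blast
qed

lemma phi_smono:
  assumes fpos: "\<forall>x. f x > 0" and "x \<in> cl_int R" "y \<in> cl_int R" "x < y"
  shows "\<phi> x < \<phi> y"
proof -
  obtain z where "x < z" "z < y" "z \<in> op_int R" "\<phi> y - \<phi> x = (y - x) * \<psi> z"
    using mvt_cl assms(2-4) by blast
  moreover have "\<psi> z > 0" using psipos fpos \<open>z \<in> op_int R\<close> by blast
  ultimately show ?thesis using assms by (smt (verit) mult_pos_pos)
qed

lemma ode2:
  assumes fpos: "\<forall>x. f x > 0" and r: "r \<in> op_int R"
  shows "\<psi>2 r = f (\<phi> r) + g (\<phi> r) * \<psi> r powr q - (c - 1) / r * \<psi> r"
  using ode[OF r] psipos[OF fpos r] by simp

lemma psi2nn:
  assumes fpos: "\<forall>x. f x > 0" and mf: "mono f" and mg: "mono g" and c1: "c \<ge> 1"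
    and r1: "r1 \<in> op_int R"
  shows "\<psi>2 r1 \<ge> 0"
proof (rule ccontr)
  assume "\<not> \<psi>2 r1 \<ge> 0"
  then have neg: "\<psi>2 r1 < 0" by simp
  obtain d where d: "d > 0" "\<And>s. 0 < s \<Longrightarrow> s < d \<Longrightarrow> s \<in> op_int R \<and> \<psi>2 s > 0 \<and> \<psi> s > 0"
    using near0 fpos by blast
  define e where "e = d / 2"
  have e: "0 < e" "e < d" using d by (auto simp: e_def)
  have "\<psi>2 e > 0" using d e by blast
  then have er: "e < r1" using neg d(2)[of r1] r1 e by (cases "r1 < d") (auto simp: op_int_def)
  define T where "T = {s. e \<le> s \<and> s \<le> r1 \<and> \<psi>2 s \<ge> 0}"
  have eT: "e \<in> T" using er \<open>\<psi>2 e > 0\<close> by (auto simp: T_def)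
  have sub: "{e..r1} \<subseteq> op_int R" using r1 e op_down by auto
  have contT: "continuous_on {e..r1} \<psi>2"
    using sub cont_psi2 by (meson continuous_at_imp_continuous_on subsetD)
  have "closed T"
  proof -
    have "T = {e..r1} \<inter> \<psi>2 -` {0..}" by (auto simp: T_def)
    moreover have "closed ({e..r1} \<inter> \<psi>2 -` {0..})"
      using continuous_closed_preimage[OF contT, of "{0..}"] by (simp add: Int_commute vimage_def)
    ultimately show ?thesis by simp
  qed
  define r0 where "r0 = Sup T"
  have bdd: "bdd_above T" by (auto simp: T_def bdd_above_def)
  have r0T: "r0 \<in> T" unfolding r0_def using closed_contains_Sup[OF _ bdd \<open>closed T\<close>] eT by blast
  have r0r1: "r0 < r1" using r0T neg by (auto simp: T_def) (metis le_less not_le)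
  have r0op: "r0 \<in> op_int R" using r0T sub by (auto simp: T_def)
  have after: "\<psi>2 s < 0" if "r0 < s" "s \<le> r1" for s
  proof (rule ccontr)
    assume "\<not> \<psi>2 s < 0"
    then have "s \<in> T" using that r0T by (auto simp: T_def)
    then have "s \<le> r0" unfolding r0_def using cSup_upper[OF _ bdd] by blast
    then show False using that by simp
  qed
  have "\<psi>2 r0 \<le> 0"
  proof (rule tendsto_upperbound)
    show "(\<psi>2 \<longlongrightarrow> \<psi>2 r0) (at_right r0)"
      using cont_psi2[OF r0op] by (simp add: isCont_def filterlim_at_split)
    show "\<forall>\<^sub>F i in at_right r0. \<psi>2 i \<le> 0"
      unfolding eventually_at_right_field using r0r1 after
      by (intro exI[of _ r1]) (auto intro: less_imp_le)
  qed simp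
  then have z: "\<psi>2 r0 = 0" using r0T by (auto simp: T_def)
  have r0pos: "r0 > 0" using r0op by (auto simp: op_int_def)
  have r1op: "r1 \<in> op_int R" by (rule r1)
  have phimono: "\<phi> r0 \<le> \<phi> s" if "r0 \<le> s" "s \<le> r1" for s
  proof (cases "r0 = s")
    case False
    have "s \<in> op_int R" using op_down[OF r1, of s] that r0op by (auto simp: op_int_def)
    then show ?thesis
      using phi_smono[OF fpos, of r0 s] that False r0op op_sub by (auto intro: less_imp_le)
  qed simp
  define h where "h s = f (\<phi> s) + g (\<phi> s) * \<psi> s powr q" for s
  have hge: "h s - h r0 \<ge> g (\<phi> r0) * (\<psi> s powr q - \<psi> r0 powr q)" if "r0 \<le> s" "s \<le> r1" for s
  proof -
    have "f (\<phi> r0) \<le> f (\<phi> s)" "g (\<phi> r0) \<le> g (\<phi> s)"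
      using phimono[OF that] mf mg by (auto simp: mono_def)
    moreover have "\<psi> s powr q \<ge> 0" by simp
    ultimately have "(g (\<phi> s) - g (\<phi> r0)) * \<psi> s powr q \<ge> 0" by simp
    then show ?thesis using \<open>f (\<phi> r0) \<le> f (\<phi> s)\<close> unfolding h_def by (simp add: algebra_simps)
  qed
  have eq: "\<psi>2 s = h s - (c - 1) / s * \<psi> s" if "s \<in> op_int R" for s
    using ode2[OF fpos that] unfolding h_def by simp
  show False
  proof (cases "c = 1")
    case True
    have psidec: "\<psi> r1 \<le> \<psi> r0"
    proof (rule DERIV_nonpos_imp_nonincreasing[of r0 r1 \<psi>])
      show "r0 \<le> r1" using r0r1 by simp
      fix t assume t: "r0 \<le> t" "t \<le> r1"
      then have "t \<in> op_int R" using op_down[OF r1, of t] r0pos by simp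
      moreover have "\<psi>2 t \<le> 0" using t z after[of t] by (cases "t = r0") auto
      ultimately show "\<exists>y. (\<psi> has_real_derivative y) (at t) \<and> y \<le> 0" using dpsi by blast
    qed
    have h1: "h r1 < 0" using eq[OF r1op] neg True by simp
    have h0: "h r0 = 0" using eq[OF r0op] z True by simp
    show False
    proof (cases "g (\<phi> r1) \<ge> 0")
      case True
      then have "h r1 > 0" using fpos unfolding h_def by (simp add: add_pos_nonneg)
      then show False using h1 by simp
    next
      case False
      have "g (\<phi> r0) \<le> g (\<phi> r1)" using phimono[of r1] r0r1 mg by (auto simp: mono_def)
      have pp: "\<psi> r1 powr q \<le> \<psi> r0 powr q"
        using psidec psipos[OF fpos r1op] q by (intro powr_mono2) auto
      have "g (\<phi> r1) * \<psi> r0 powr q \<le> g (\<phi> r1) * \<psi> r1 powr q"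
        using pp False by (simp add: mult_left_mono_neg)
      moreover have "g (\<phi> r0) * \<psi> r0 powr q \<le> g (\<phi> r1) * \<psi> r0 powr q"
        using \<open>g (\<phi> r0) \<le> g (\<phi> r1)\<close> by (simp add: mult_right_mono)
      moreover have "f (\<phi> r0) \<le> f (\<phi> r1)" using phimono[of r1] r0r1 mf by (auto simp: mono_def)
      ultimately have "h r0 \<le> h r1" unfolding h_def by simp
      then show False using h0 h1 by simp
    qed
  next
    case False
    then have c1': "c > 1" using c1 by simp
    define G where "G s = g (\<phi> r0) * (\<psi> s powr q - \<psi> r0 powr q) - (c - 1) * (\<psi> s / s - \<psi> r0 / r0)" for s
    have p0: "\<psi> r0 > 0" using psipos[OF fpos r0op] .
    have d1: "DERIV (\<lambda>s. \<psi> s powr q) r0 :> q * \<psi> r0 powr (q - of_nat 1) * \<psi>2 r0"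
      by (rule DERIV_fun_powr[OF dpsi[OF r0op] p0])
    have d2: "DERIV (\<lambda>s. \<psi> s / s) r0 :> (\<psi>2 r0 * r0 - \<psi> r0 * 1) / (r0 * r0)"
      using DERIV_divide[OF dpsi[OF r0op] DERIV_ident] r0pos by simp
    have dG: "DERIV G r0 :> g (\<phi> r0) * (q * \<psi> r0 powr (q - of_nat 1) * \<psi>2 r0 - 0)
        - (c - 1) * ((\<psi>2 r0 * r0 - \<psi> r0 * 1) / (r0 * r0) - 0)"
      unfolding G_def by (intro DERIV_diff DERIV_cmult d1 d2 DERIV_const)
    have "(c - 1) * (\<psi> r0 / (r0 * r0)) > 0" using c1' p0 r0pos by simp
    then have "g (\<phi> r0) * (q * \<psi> r0 powr (q - of_nat 1) * \<psi>2 r0 - 0)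
        - (c - 1) * ((\<psi>2 r0 * r0 - \<psi> r0 * 1) / (r0 * r0) - 0) > 0"
    proof -
      have "g (\<phi> r0) * (q * \<psi> r0 powr (q - of_nat 1) * \<psi>2 r0 - 0)
        - (c - 1) * ((\<psi>2 r0 * r0 - \<psi> r0 * 1) / (r0 * r0) - 0) = (c - 1) * (\<psi> r0 / (r0 * r0))"
        unfolding z by simp
      then show ?thesis using \<open>(c - 1) * (\<psi> r0 / (r0 * r0)) > 0\<close> by simp
    qed
    then obtain dd where dd: "dd > 0" "\<And>t. t > 0 \<Longrightarrow> t < dd \<Longrightarrow> G r0 < G (r0 + t)"
      using DERIV_pos_inc_right[OF dG] by blast
    define t where "t = min (dd/2) (r1 - r0)"
    have t: "0 < t" "t < dd" using dd r0r1 by (auto simp: t_def)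
    define s where "s = r0 + t"
    have s: "r0 < s" "s \<le> r1" using t r0r1 by (auto simp: s_def t_def)
    have sop: "s \<in> op_int R" using op_down[OF r1, of s] s r0pos by simp
    have "G s > 0" using dd(2)[OF t] by (simp add: G_def s_def)
    moreover have "\<psi>2 s \<ge> G s"
    proof -
      have e0: "h r0 = (c - 1) / r0 * \<psi> r0" using eq[OF r0op] z by simp
      have a1: "(c - 1) / s * \<psi> s = (c - 1) * (\<psi> s / s)" "(c - 1) / r0 * \<psi> r0 = (c - 1) * (\<psi> r0 / r0)"
        by simp_all
      have "\<psi>2 s = (h s - h r0) - (c - 1) * (\<psi> s / s - \<psi> r0 / r0)"
        unfolding eq[OF sop] e0 a1 right_diff_distrib by linarith
      then show ?thesis using hge[OF less_imp_le[OF s(1)] s(2)] unfolding G_def by simp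
    qed
    ultimately show False using after[OF s] by simp
  qed
qed

lemma psi_mono:
  assumes fpos: "\<forall>x. f x > 0" and mf: "mono f" and mg: "mono g" and c1: "c \<ge> 1"
    and x: "x \<in> op_int R" and y: "y \<in> op_int R" and xy: "x \<le> y"
  shows "\<psi> x \<le> \<psi> y"
proof (rule DERIV_nonneg_imp_nondecreasing[OF xy])
  fix t assume t: "x \<le> t" "t \<le> y"
  then have "t \<in> op_int R" using op_down[OF y, of t] x by (auto simp: op_int_def)
  then show "\<exists>z. (\<psi> has_real_derivative z) (at t) \<and> z \<ge> 0"
    using dpsi psi2nn[OF fpos mf mg c1] by blast
qed

lemma convex_op: "convex (op_int R)"
proof (cases R)
  case (real b) then have "op_int R = {0<..<b}" by (auto simp: op_int_def)
  then show ?thesis by simp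
next
  case PInf then have "op_int R = {0<..}" by (auto simp: op_int_def)
  then show ?thesis by simp
next
  case MInf then show ?thesis using R by simp
qed

lemma convex_cl: "convex (cl_int R)"
proof (cases R)
  case (real b) then have "cl_int R = {0..<b}" by (auto simp: cl_int_def)
  then show ?thesis by simp
next
  case PInf then have "cl_int R = {0..}" by (auto simp: cl_int_def)
  then show ?thesis by simp
next
  case MInf then show ?thesis using R by simp
qed

lemma phi_convex:
  assumes fpos: "\<forall>x. f x > 0" and mf: "mono f" and mg: "mono g" and c1: "c \<ge> 1"
  shows "convex_on (cl_int R) \<phi>"
proof -
  have cop: "convex_on (op_int R) \<phi>"
  proof (rule convex_on_realI[where f'="\<psi>"])
    show "connected (op_int R)" using convex_op convex_connected by blast
    show "\<And>x. x \<in> op_int R \<Longrightarrow> (\<phi> has_real_derivative \<psi> x) (at x)" by (rule dphi)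
    show "\<And>x y. x \<in> op_int R \<Longrightarrow> y \<in> op_int R \<Longrightarrow> x \<le> y \<Longrightarrow> \<psi> x \<le> \<psi> y"
      using psi_mono[OF fpos mf mg c1] by blast
  qed
  show ?thesis
  proof (rule convex_on_linorderI)
    show "convex (cl_int R)" by (rule convex_cl)
    fix t x y :: real assume t: "t > 0" "t < 1" and x: "x \<in> cl_int R" and y: "y \<in> cl_int R" and xy: "x < y"
    have yop: "y \<in> op_int R" using cl_op[OF y] xy x by (auto simp: cl_int_def)
    show "\<phi> ((1 - t) *\<^sub>R x + t *\<^sub>R y) \<le> (1 - t) * \<phi> x + t * \<phi> y"
    proof (cases "x = 0")
      case False
      then have "x \<in> op_int R" using cl_op[OF x] by simp
      then show ?thesis using convex_onD[OF cop, of t x y] t yop by simp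
    next
      case True
      have ypos: "y > 0" using yop by (auto simp: op_int_def)
      have pop: "t * y \<in> op_int R" using op_down[OF yop, of "t*y"] t ypos by (simp add: mult_pos_pos)
      have l1: "((\<lambda>s. \<phi> ((1 - t) * s + t * y)) \<longlongrightarrow> \<phi> (t * y)) (at_right 0)"
      proof (rule isCont_tendsto_compose[OF cont_phi[OF pop]])
        have "((\<lambda>s. (1 - t) * s + t * y) \<longlongrightarrow> (1 - t) * 0 + t * y) (at_right 0)"
          by (intro tendsto_intros)
        then show "((\<lambda>s. (1 - t) * s + t * y) \<longlongrightarrow> t * y) (at_right 0)" by simp
      qed
      have l2: "((\<lambda>s. (1 - t) * \<phi> s + t * \<phi> y) \<longlongrightarrow> (1 - t) * a + t * \<phi> y) (at_right 0)"
        by (intro tendsto_intros phi0)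
      have ev: "\<forall>\<^sub>F s in at_right 0. \<phi> ((1 - t) * s + t * y) \<le> (1 - t) * \<phi> s + t * \<phi> y"
        unfolding eventually_at_right_field
      proof (intro exI[of _ y] conjI allI impI)
        fix s :: real assume s: "0 < s" "s < y"
        then have "s \<in> op_int R" using op_down[OF yop, of s] by simp
        then show "\<phi> ((1 - t) * s + t * y) \<le> (1 - t) * \<phi> s + t * \<phi> y"
          using convex_onD[OF cop, of t s y] t yop by simp
      qed (use ypos in simp)
      have "\<phi> (t * y) \<le> (1 - t) * a + t * \<phi> y"
        using tendsto_le[OF trivial_limit_at_right_real l2 l1 ev] .
      then show ?thesis using True phi00 by simp
    qed
  qed
qed

lemma bound:
  assumes fpos: "\<forall>x. f x > 0" and mf: "mono f" and mg: "mono g" and c1: "c \<ge> 1"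
    and r: "r \<in> cl_int R"
  shows "gminus g (\<phi> r) = 0 \<or> (if r = 0 then 0 else \<psi> r) \<le> (f (\<phi> r) / gminus g (\<phi> r)) powr (1 / q)"
proof (cases "r = 0")
  case True then show ?thesis by simp
next
  case False
  then have rop: "r \<in> op_int R" using cl_op[OF r] by simp
  have rpos: "r > 0" using rop by (auto simp: op_int_def)
  have p: "\<psi> r > 0" using psipos[OF fpos rop] .
  show ?thesis
  proof (cases "gminus g (\<phi> r) = 0")
    case False
    then have gneg: "g (\<phi> r) < 0" and gm: "gminus g (\<phi> r) = - g (\<phi> r)"
      by (auto simp: gminus_def max_def split: if_splits)
    have "(c - 1) / r * \<psi> r \<ge> 0" using c1 rpos p by simp
    then have "f (\<phi> r) + g (\<phi> r) * \<psi> r powr q \<ge> 0"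
      using ode2[OF fpos rop] psi2nn[OF fpos mf mg c1 rop] by simp
    then have "\<psi> r powr q * (- g (\<phi> r)) \<le> f (\<phi> r)" by (simp add: algebra_simps)
    then have "\<psi> r powr q \<le> f (\<phi> r) / (- g (\<phi> r))"
      by (subst pos_le_divide_eq) (use gneg in auto)
    then have le: "\<psi> r powr q \<le> f (\<phi> r) / gminus g (\<phi> r)" using gm by simp
    have "\<psi> r = (\<psi> r powr q) powr (1 / q)" using q p by (simp add: powr_powr)
    also have "\<dots> \<le> (f (\<phi> r) / gminus g (\<phi> r)) powr (1 / q)"
      using le q by (intro powr_mono2) auto
    finally show ?thesis using \<open>r \<noteq> 0\<close> by simp
  qed simp
qed

lemma part3:
  assumes fpos: "\<forall>x. f x > 0" and mf: "mono f" and mg: "mono g" and gnn: "\<forall>x. g x \<ge> 0"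
    and c1: "c \<ge> 1" and r: "r \<in> op_int R"
  shows "\<psi>2 r \<ge> \<psi> r / r"
proof -
  define h where "h s = f (\<phi> s) + g (\<phi> s) * \<psi> s powr q" for s
  have rpos: "r > 0" using r by (auto simp: op_int_def)
  have hmono: "h s \<le> h r" if "0 < s" "s \<le> r" for s
  proof -
    have sop: "s \<in> op_int R" using op_down[OF r that] .
    have "\<phi> s \<le> \<phi> r" using phi_smono[OF fpos, of s r] that sop r op_sub by (cases "s = r") (auto intro: less_imp_le)
    then have fg: "f (\<phi> s) \<le> f (\<phi> r)" "g (\<phi> s) \<le> g (\<phi> r)" using mf mg by (auto simp: mono_def)
    have "\<psi> s \<le> \<psi> r" using psi_mono[OF fpos mf mg c1 sop r that(2)] .
    then have "\<psi> s powr q \<le> \<psi> r powr q" using psipos[OF fpos sop] q by (intro powr_mono2) auto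
    then have "g (\<phi> s) * \<psi> s powr q \<le> g (\<phi> r) * \<psi> r powr q"
      using fg gnn by (intro mult_mono) auto
    then show ?thesis using fg unfolding h_def by simp
  qed
  have hr: "h r > 0" unfolding h_def using fpos gnn by (simp add: add_pos_nonneg)
  have eq: "\<psi>2 s = h s - (c - 1) / s * \<psi> s" if "s \<in> op_int R" for s
    using ode2[OF fpos that] unfolding h_def by simp
  define Q where "Q s = s powr (c - 1) * \<psi> s - (h r / c) * s powr c" for s
  have Qdec: "Q r \<le> Q s" if "0 < s" "s \<le> r" for s
  proof (rule DERIV_nonpos_imp_nonincreasing[OF that(2)])
    fix x assume x: "s \<le> x" "x \<le> r"
    then have xop: "x \<in> op_int R" using op_down[OF r, of x] that by simp
    have xpos: "x > 0" using xop by (auto simp: op_int_def)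
    define P where "P = x powr (c - 1)"
    have d: "DERIV Q x :> (c - 1) * x powr (c - 1 - 1) * \<psi> x + x powr (c - 1) * \<psi>2 x
        - (h r / c) * (c * x powr (c - 1))"
    proof -
      have dp: "DERIV (\<lambda>x. x powr (c - 1)) x :> (c - 1) * x powr (c - 1 - 1)"
        by (rule has_real_derivative_powr[OF xpos])
      have dpc: "DERIV (\<lambda>x. x powr c) x :> c * x powr (c - 1)"
        by (rule has_real_derivative_powr[OF xpos])
      have eqQ: "Q = (\<lambda>s. s powr (c - 1) * \<psi> s - (h r / c) * s powr c)"
        by (rule ext) (simp add: Q_def)
      have "DERIV (\<lambda>s. s powr (c - 1) * \<psi> s - (h r / c) * s powr c) x :>
          (c - 1) * x powr (c - 1 - 1) * \<psi> x + \<psi>2 x * x powr (c - 1) - (h r / c) * (c * x powr (c - 1))"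
        by (rule DERIV_diff[OF DERIV_mult[OF dp dpsi[OF xop]] DERIV_cmult[OF dpc, of "h r / c"]])
      then show ?thesis unfolding eqQ by (simp only: mult.commute[of "\<psi>2 x"])
    qed
    have e1: "x powr (c - 1 - 1) = P / x" unfolding P_def using xpos by (simp add: powr_diff power2_eq_square)
    have "(c - 1) * x powr (c - 1 - 1) * \<psi> x + x powr (c - 1) * \<psi>2 x
        - (h r / c) * (c * x powr (c - 1)) = P * (h x - h r)"
      unfolding e1 eq[OF xop] P_def[symmetric] using c by (simp add: field_simps)
    also have "\<dots> \<le> 0" using hmono[of x] x xpos unfolding P_def
      by (simp add: mult_nonneg_nonpos)
    finally show "\<exists>y. DERIV Q x :> y \<and> y \<le> 0" using d by blast
  qed
  have "Q r \<le> 0"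
  proof (rule tendsto_lowerbound[OF psi0])
    show "\<forall>\<^sub>F s in at_right 0. Q r \<le> \<psi> s"
      unfolding eventually_at_right_field
    proof (intro exI[of _ "min r 1"] conjI allI impI)
      fix s :: real assume s: "0 < s" "s < min r 1"
      have sop: "s \<in> op_int R" using op_down[OF r, of s] s by simp
      have "s powr (c - 1) \<le> 1" using s c1 by (intro powr_le1) auto
      then have "s powr (c - 1) * \<psi> s \<le> \<psi> s"
        using psipos[OF fpos sop] mult_right_mono[of "s powr (c - 1)" 1 "\<psi> s"] by simp
      moreover have "(h r / c) * s powr c \<ge> 0" using hr c by simp
      ultimately have "Q s \<le> \<psi> s" unfolding Q_def by simp
      then show "Q r \<le> \<psi> s" using Qdec[of s] s by simp
    qed (use rpos in simp)
  qed simp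
  define P where "P = r powr (c - 1)"
  have Ppos: "P > 0" unfolding P_def using rpos by simp
  have "r powr c = P * r" unfolding P_def using rpos powr_add[of r "c - 1" 1] by simp
  then have "P * \<psi> r \<le> P * ((h r / c) * r)" using \<open>Q r \<le> 0\<close> unfolding Q_def P_def[symmetric]
    by (simp add: algebra_simps)
  then have "\<psi> r \<le> (h r / c) * r" using Ppos mult_le_cancel_left_pos by blast
  then have "\<psi> r / r \<le> h r / c" using rpos by (simp add: divide_le_eq mult.commute)
  then have "c * (\<psi> r / r) \<le> h r" using c by (simp add: le_divide_eq mult.commute)
  moreover have "\<psi>2 r = h r - (c - 1) * (\<psi> r / r)" using eq[OF r] by simp
  ultimately show ?thesis using left_diff_distrib[of c 1 "\<psi> r / r"] by linarith
qed


end

theorem lemma2p1: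
  fixes c q a :: real and f g \<phi> :: "real \<Rightarrow> real" and R :: ereal
  assumes "c > 0" and "q > 0"
    and "continuous_on UNIV f" and "continuous_on UNIV g"
    and "0 < R"
    and "is_solution c q f g a R \<phi>"
  shows "((\<forall>x. f x > 0) \<longrightarrow> strict_mono_on (cl_int R) \<phi>)
    \<and> ((\<forall>x. f x > 0) \<and> mono f \<and> mono g \<and> c \<ge> 1 \<longrightarrow>
         convex_on (cl_int R) \<phi> \<and>
         (\<forall>r\<in>cl_int R. gminus g (\<phi> r) = 0 \<or>
             (if r = 0 then 0 else deriv \<phi> r)
               \<le> (f (\<phi> r) / gminus g (\<phi> r)) powr (1 / q)))
    \<and> ((\<forall>x. f x > 0) \<and> mono f \<and> mono g \<and> (\<forall>x. g x \<ge> 0) \<and> c \<ge> 1 \<longrightarrow>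
         (\<forall>r\<in>op_int R. deriv (deriv \<phi>) r \<ge> deriv \<phi> r / r))"
proof -
  interpret sol c q a f g \<phi> R using assms by unfold_locales
  show ?thesis
    using phi_smono phi_convex bound part3
    by (auto intro!: strict_mono_onI)
qed

end
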